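(* Let $p$ be a prime with $p\equiv 1\pmod{12}$, and let $a,b$ be positive integers with $p=a^2-12b^2$. Then the equation $z^4+360z^2-48=0$ has a solution $z\in\mathbb{F}_p$ if and only if $a\equiv 1\pmod 3$. *)

theory Defs
  imports "HOL-Number_Theory.Number_Theory"
begin

end

theory Submission
  imports Defs
begin

lemma Leg_abs: "\<bar>Legendre x p\<bar> \<le> 1"
  by (simp add: Legendre_def)

lemma small_cong_eq:
  fixes p x y :: int
  assumes "p > 2" "\<bar>x\<bar> \<le> 1" "\<bar>y\<bar> \<le> 1" "[x = y] (mod p)"
  shows "x = y"
proof (rule ccontr)
  assume "x \<noteq> y"
  have "p dvd x - y" using assms(4) by (simp add: cong_iff_dvd_diff)
  then have "\<bar>p\<bar> \<le> \<bar>x - y\<bar>" using \<open>x \<noteq> y\<close> dvd_imp_le_int by simp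
  then show False using assms by linarith
qed

lemma euler_int:
  fixes p x :: int
  assumes "prime p" "p > 2"
  shows "[Legendre x p = x ^ nat ((p-1) div 2)] (mod p)"
proof -
  have pn: "prime (nat p)" using assms by simp
  have "nat p > 2" using assms by simp
  from euler_criterion[OF pn this, of x]
  have "[Legendre x (int (nat p)) = x ^ ((nat p - 1) div 2)] (mod int (nat p))" .
  moreover have "(nat p - 1) div 2 = nat ((p-1) div 2)" using assms by (simp add: nat_div_distrib nat_diff_distrib)
  ultimately show ?thesis using assms by simp
qed

lemma Leg_mult:
  fixes p x y :: int
  assumes "prime p" "p > 2"
  shows "Legendre (x*y) p = Legendre x p * Legendre y p"
proof -
  let ?h = "nat ((p-1) div 2)"
  have "[Legendre (x*y) p = (x*y) ^ ?h] (mod p)" by (rule euler_int[OF assms])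
  moreover have "[Legendre x p * Legendre y p = x ^ ?h * y ^ ?h] (mod p)"
    by (intro cong_mult euler_int[OF assms])
  ultimately have "[Legendre (x*y) p = Legendre x p * Legendre y p] (mod p)"
    by (metis cong_sym cong_trans power_mult_distrib)
  moreover have "\<bar>Legendre x p * Legendre y p\<bar> \<le> 1"
    using Leg_abs[of x p] Leg_abs[of y p] by (simp add: abs_mult mult_le_one)
  ultimately show ?thesis using small_cong_eq assms(2) Leg_abs by blast
qed

lemma Leg_cong:
  fixes p x y :: int
  assumes "prime p" "p > 2" "[x = y] (mod p)"
  shows "Legendre x p = Legendre y p"
proof -
  let ?h = "nat ((p-1) div 2)"
  have "[Legendre x p = x ^ ?h] (mod p)" by (rule euler_int[OF assms(1,2)])
  moreover have "[Legendre y p = y ^ ?h] (mod p)" by (rule euler_int[OF assms(1,2)])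
  moreover have "[x ^ ?h = y ^ ?h] (mod p)" using assms(3) by (rule cong_pow)
  ultimately have "[Legendre x p = Legendre y p] (mod p)"
    by (metis cong_sym cong_trans)
  then show ?thesis using small_cong_eq assms(2) Leg_abs by blast
qed

lemma Leg_sq:
  fixes p x :: int
  assumes "\<not> p dvd x" "prime p"
  shows "Legendre (x^2) p = 1"
proof -
  have "\<not> [x^2 = 0] (mod p)" using assms by (simp add: cong_0_iff prime_dvd_power_iff)
  moreover have "QuadRes p (x^2)" unfolding QuadRes_def using cong_refl by blast
  ultimately show ?thesis by (simp add: Legendre_def)
qed

lemma Leg_neg1:
  fixes p :: int
  assumes "prime p" "p mod 4 = 1"
  shows "Legendre (-1) p = 1"
proof -
  have p2: "p > 2" using assms prime_ge_2_int[OF assms(1)]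
    by (smt (verit) mod_pos_pos_trivial)
  have e: "(p-1) div 2 = 2 * ((p-1) div 4)" using assms(2) by presburger
  have "even ((p-1) div 2)" by (subst e) simp
  then have "even (nat ((p-1) div 2))" using p2 by (simp add: even_nat_iff)
  then have "(-1::int) ^ nat ((p-1) div 2) = 1" by simp
  then have "[Legendre (-1) p = 1] (mod p)" using euler_int[OF assms(1) p2, of "-1"] by simp
  then show ?thesis using small_cong_eq[OF p2 Leg_abs, of 1 "-1" p] by simp
qed

lemma Leg_2:
  fixes p :: int
  assumes "prime p" "p mod 8 = 1"
  shows "Legendre 2 p = 1"
proof -
  define k where "k = p div 8"
  have k: "p = 8*k+1" using assms(2) unfolding k_def by presburger
  have "p \<ge> 2" using prime_ge_2_int[OF assms(1)] .
  then have kpos: "k \<ge> 1" using k by linarith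
  have pn: "prime (nat p)" using assms by simp
  have p2: "2 < nat p" using k kpos by linarith
  have ip: "int (nat p) = p" using k kpos by linarith
  have nz: "[2 \<noteq> 0] (mod int (nat p))" unfolding ip
  proof
    assume "[2 = 0] (mod p)"
    then have "p dvd 2" by (simp add: cong_0_iff)
    then have "p \<le> 2" by (simp add: zdvd_imp_le)
    then show False using k kpos by linarith
  qed
  interpret G: GAUSS "nat p" 2 using pn p2 nz by unfold_locales auto
  have h: "(int (nat p) - 1) div 2 = 4*k" using kpos unfolding ip k by simp
  have h': "(p - 1) div 2 = 4*k" using kpos unfolding k by simp
  have md: "(z*2) mod p = z*2" if "0 < z" "z \<le> 4*k" for z
    using that k by (intro mod_pos_pos_trivial) auto
  have "G.E = (\<lambda>x. x*2) ` {2*k<..4*k}"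
  proof
    show "G.E \<subseteq> (\<lambda>x. x*2) ` {2*k<..4*k}"
    proof
      fix x assume "x \<in> G.E"
      then have xc: "x \<in> G.C" "x > (int (nat p) - 1) div 2" unfolding G.E_def by auto
      then obtain y where y: "y \<in> G.B" "x = y mod int (nat p)" unfolding G.C_def by auto
      then obtain z where z0: "z \<in> G.A" "y = z*2" unfolding G.B_def by auto
      then have z: "0 < z" "z \<le> 4*k" "x = (z*2) mod p" "x > 4*k"
        using xc y unfolding G.A_def ip h' by auto
      then have "x = z*2" using md by simp
      then show "x \<in> (\<lambda>x. x*2) ` {2*k<..4*k}" using z h' by auto
    qed
  next
    show "(\<lambda>x. x*2) ` {2*k<..4*k} \<subseteq> G.E"
    proof
      fix x assume "x \<in> (\<lambda>x. x*2) ` {2*k<..4*k}"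
      then obtain z where z: "2*k < z" "z \<le> 4*k" "x = z*2" by auto
      then have xm: "x = (z*2) mod p" using md kpos by simp
      have "z \<in> G.A" unfolding G.A_def ip h' using z kpos by auto
      then have "z*2 \<in> G.B" unfolding G.B_def by auto
      then have "x \<in> G.C" unfolding G.C_def using xm ip by (metis image_eqI)
      then show "x \<in> G.E" unfolding G.E_def ip h' using z by auto
    qed
  qed
  moreover have "card ((\<lambda>x::int. x*2) ` {2*k<..4*k}) = nat (2*k)"
    by (subst card_image) (auto simp: inj_on_def)
  ultimately have "card G.E = 2 * nat k" by simp
  then have "Legendre 2 (int (nat p)) = 1" using G.gauss_lemma by simp
  then show ?thesis using ip by simp
qed

lemma Leg_2_3: "Legendre 2 3 = -1"
proof -
  have "\<not> QuadRes 3 2"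
  proof
    assume "QuadRes 3 2"
    then obtain y :: int where "[y^2 = 2] (mod 3)" unfolding QuadRes_def by auto
    then have "((y mod 3)^2) mod 3 = 2" by (simp add: cong_def power_mod)
    moreover have "y mod 3 = 0 \<or> y mod 3 = 1 \<or> y mod 3 = 2" by presburger
    ultimately show False by auto
  qed
  moreover have "\<not> [2 = 0] (mod (3::int))" by (simp add: cong_def)
  ultimately show ?thesis by (simp add: Legendre_def)
qed

lemma Leg_1: "prime (p::int) \<Longrightarrow> Legendre 1 p = 1"
  using Leg_sq[of p 1] prime_gt_1_int[of p] by force

lemma Leg_m3:
  fixes q :: int
  assumes "prime q" "q > 3"
  shows "Legendre (-3) q = (if q mod 3 = 1 then 1 else -1)"
proof -
  let ?h = "nat ((q-1) div 2)"
  have q2: "q > 2" using assms by simp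
  have "[Legendre (-1) q = (-1)^?h] (mod q)" using euler_int[OF assms(1) q2] .
  then have m1: "Legendre (-1) q = (-1)^?h"
    by (intro small_cong_eq[OF q2 Leg_abs]) (simp_all add: power_abs)
  have p3: "prime (3::int)" by simp
  have qr: "Legendre 3 q * Legendre q 3 = (-1)^?h"
    using Quadratic_Reciprocity_int[of 3 q] assms by simp
  have q3: "q mod 3 = 1 \<or> q mod 3 = 2"
  proof -
    have "\<not> 3 dvd q"
    proof
      assume "3 dvd q"
      moreover from assms(1) have H: "\<forall>m. 0 \<le> m \<and> m dvd q \<longrightarrow> m = 1 \<or> m = q" unfolding prime_int_iff by blast
      ultimately have "(3::int) = 1 \<or> 3 = q" using mp[OF spec[OF H, of 3]] by simp
      then have "3 = q" by simp
      then show False using assms by simp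
    qed
    then show ?thesis by presburger
  qed
  have Lq3: "Legendre q 3 = (if q mod 3 = 1 then 1 else -1)"
  proof -
    have "Legendre q 3 = Legendre (q mod 3) 3"
      by (rule Leg_cong[OF p3]) (simp_all add: cong_def)
    then show ?thesis using q3 Leg_2_3 Leg_1[OF p3] by auto
  qed
  have sq: "((-1::int)^?h) * ((-1)^?h) = 1"
    by (simp add: power_mult_distrib[symmetric])
  have sq2: "Legendre q 3 * Legendre q 3 = 1" using Lq3 by simp
  have "Legendre 3 q = (-1)^?h * Legendre q 3"
    using qr sq2 by (metis mult.assoc mult.right_neutral)
  moreover have "Legendre (-3) q = Legendre (-1) q * Legendre 3 q"
    using Leg_mult[OF assms(1) q2, of "-1" 3] by simp
  ultimately have "Legendre (-3) q = Legendre q 3"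
    using m1 sq by (metis mult.assoc mult_1)
  then show ?thesis using Lq3 by simp
qed

lemma prod_A:
  fixes p n :: int
  assumes pr: "prime p" "p > 2"
  shows "n > 0 \<Longrightarrow> (\<forall>q. prime q \<longrightarrow> q dvd n \<longrightarrow> q mod 3 \<noteq> 0 \<and> Legendre q p = (if q mod 3 = 1 then 1 else -1))
    \<Longrightarrow> n mod 3 \<noteq> 0 \<and> Legendre n p = (if n mod 3 = 1 then 1 else -1)"
proof (induction "nat n" arbitrary: n rule: less_induct)
  case less
  show ?case
  proof (cases "n = 1")
    case True then show ?thesis using Leg_1[OF pr(1)] by simp
  next
    case False
    then have "\<not> is_unit n" using less.prems by simp
    then obtain q where q: "q dvd n" "prime q" using prime_divisor_exists[of n] less.prems by auto
    then obtain m where m: "n = q*m" by (auto elim: dvdE)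
    have q1: "q > 1" using prime_gt_1_int[OF q(2)] .
    have m0: "m > 0" using less.prems(1) m q1 by (simp add: zero_less_mult_iff)
    have "q*m \<ge> 2*m" using q1 m0 by (intro mult_right_mono) auto
    then have "m < n" using m m0 by linarith
    then have "nat m < nat n" using m0 by simp
    moreover have "\<forall>r. prime r \<longrightarrow> r dvd m \<longrightarrow> r mod 3 \<noteq> 0 \<and> Legendre r p = (if r mod 3 = 1 then 1 else -1)"
      using less.prems(2) m by auto
    ultimately have IH: "m mod 3 \<noteq> 0 \<and> Legendre m p = (if m mod 3 = 1 then 1 else -1)"
      using less.hyps[of m] m0 by simp
    have Q: "q mod 3 \<noteq> 0 \<and> Legendre q p = (if q mod 3 = 1 then 1 else -1)"
      using spec[OF less.prems(2), of q] q by simp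
    have L: "Legendre n p = Legendre q p * Legendre m p" using Leg_mult[OF pr] m by simp
    have nm: "n mod 3 = ((q mod 3) * (m mod 3)) mod 3" using m by (simp add: mod_mult_eq)
    have "q mod 3 = 1 \<or> q mod 3 = 2" "m mod 3 = 1 \<or> m mod 3 = 2" using Q IH by presburger+
    then show ?thesis using nm L Q IH by auto
  qed
qed

lemma prod_B:
  fixes p n :: int
  assumes pr: "prime p" "p > 2"
  shows "n > 0 \<Longrightarrow> (\<forall>q. prime q \<longrightarrow> q dvd n \<longrightarrow> Legendre q p = 1) \<Longrightarrow> Legendre n p = 1"
proof (induction "nat n" arbitrary: n rule: less_induct)
  case less
  show ?case
  proof (cases "n = 1")
    case True then show ?thesis using Leg_1[OF pr(1)] by simp
  next
    case False
    then have "\<not> is_unit n" using less.prems by simp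
    then obtain q where q: "q dvd n" "prime q" using prime_divisor_exists[of n] less.prems by auto
    then obtain m where m: "n = q*m" by (auto elim: dvdE)
    have q1: "q > 1" using prime_gt_1_int[OF q(2)] .
    have m0: "m > 0" using less.prems(1) m q1 by (simp add: zero_less_mult_iff)
    have "q*m \<ge> 2*m" using q1 m0 by (intro mult_right_mono) auto
    then have "m < n" using m m0 by linarith
    then have "nat m < nat n" using m0 by simp
    moreover have "\<forall>r. prime r \<longrightarrow> r dvd m \<longrightarrow> Legendre r p = 1"
      using less.prems(2) m by auto
    ultimately have IH: "Legendre m p = 1" using less.hyps[of m] m0 by simp
    have "Legendre q p = 1" using less.prems(2) q by blast
    then show ?thesis using Leg_mult[OF pr] m IH by simp
  qed
qed

lemma poly_id: "(s::int)*(s-2)^6 - 256*(52*s-180) = (s^2-12)*(s^5 - 12*s^4 + 72*s^3 - 304*s^2 + 1104*s - 3840)"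
  by (simp add: eval_nat_numeral algebra_simps)

lemma K1:
  fixes p s y i z :: int
  assumes "p dvd s^2 - 12" "[y^2 = s] (mod p)" "[16*i = 1] (mod p)" "z = y*(s-2)^3*i"
  shows "[z^4 + 360*z^2 - 48 = 0] (mod p)"
proof -
  note id = poly_id[of s]
  have c1: "[s*(s-2)^6 = 256*(52*s-180)] (mod p)"
    unfolding cong_iff_dvd_diff id using assms(1) by simp
  have "z^2 = y^2 * (s-2)^6 * i^2" using assms(4) by (simp add: power_mult_distrib flip: power_mult)
  moreover have "[y^2 * (s-2)^6 * i^2 = s * (s-2)^6 * i^2] (mod p)"
    using assms(2) by (intro cong_mult cong_refl)
  moreover have "[s * (s-2)^6 * i^2 = 256*(52*s-180) * i^2] (mod p)"
    by (rule cong_mult[OF c1 cong_refl])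
  moreover have "256*(52*s-180) * i^2 = (16*i)^2 * (52*s-180)" by (simp add: eval_nat_numeral algebra_simps)
  moreover have "[(16*i)^2 * (52*s-180) = 1^2 * (52*s-180)] (mod p)"
    using assms(3) by (intro cong_mult cong_pow cong_refl)
  ultimately have z2: "[z^2 = 52*s-180] (mod p)"
    by (metis (no_types, lifting) cong_trans power_one mult_1)
  have "z^4 + 360*z^2 - 48 = (z^2)^2 + 360*z^2 - 48" by (simp add: eval_nat_numeral algebra_simps)
  moreover have "[(z^2)^2 + 360*z^2 - 48 = (52*s-180)^2 + 360*(52*s-180) - 48] (mod p)"
    using z2 by (intro cong_diff cong_add cong_mult cong_pow cong_refl)
  moreover have "(52*s-180)^2 + 360*(52*s-180) - 48 = 2704 * (s^2-12)" by (simp add: eval_nat_numeral algebra_simps)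
  moreover have "[2704 * (s^2-12) = 0] (mod p)" unfolding cong_0_iff using assms(1) by (rule dvd_mult)
  ultimately show ?thesis by (metis cong_trans)
qed

lemma K2:
  fixes p s z :: int
  assumes "prime p" "p > 8" "p dvd s^2 - 12" "p dvd z^2 - (52*s - 180)"
  shows "QuadRes p s"
proof -
  note id = poly_id[of s]
  have c1: "[s*((s-2)^3)^2 = 256*(52*s-180)] (mod p)"
  proof -
    have "s*((s-2)^3)^2 = s*(s-2)^6" by (simp flip: power_mult)
    moreover have "p dvd s*(s-2)^6 - 256*(52*s-180)" unfolding id using assms(3) by simp
    ultimately show ?thesis by (simp add: cong_iff_dvd_diff)
  qed
  have c2: "[(16*z)^2 = 256*(52*s-180)] (mod p)"
  proof -
    have "[z^2 = 52*s-180] (mod p)" using assms(4) by (simp add: cong_iff_dvd_diff)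
    then have "[256*z^2 = 256*(52*s-180)] (mod p)" by (intro cong_mult cong_refl)
    then show ?thesis by (simp add: power_mult_distrib)
  qed
  have nd: "\<not> p dvd (s-2)^3"
  proof
    assume "p dvd (s-2)^3"
    then have "p dvd s-2" using assms(1) prime_dvd_power by blast
    then have "p dvd (s-2)*(s+2) - (s^2-12)" using dvd_diff[OF dvd_mult2[OF \<open>p dvd s-2\<close>, of "s+2"] assms(3)] by simp
    moreover have "(s-2)*(s+2) - (s^2-12) = 8" by (simp add: eval_nat_numeral algebra_simps)
    ultimately have "p dvd 8" by simp
    then have "p \<le> 8" by (simp add: zdvd_imp_le)
    then show False using assms(2) by simp
  qed
  have "coprime ((s-2)^3) p" using prime_imp_coprime[OF assms(1) nd] by (simp add: coprime_commute)
  then obtain w where w: "[(s-2)^3 * w = 1] (mod p)" using cong_solve_coprime_int by blast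
  have "(16*z*w)^2 = (16*z)^2 * w^2" by (simp add: power_mult_distrib)
  moreover have "[(16*z)^2 * w^2 = s*((s-2)^3)^2 * w^2] (mod p)"
    using c1 c2 by (intro cong_mult cong_refl) (metis cong_sym cong_trans)
  moreover have "s*((s-2)^3)^2 * w^2 = s*((s-2)^3*w)^2" by (simp add: power_mult_distrib)
  moreover have "[s*((s-2)^3*w)^2 = s*1^2] (mod p)" using w by (intro cong_mult cong_pow cong_refl)
  ultimately have "[(16*z*w)^2 = s] (mod p)" by (metis cong_trans power_one mult_1_right)
  then show ?thesis unfolding QuadRes_def by blast
qed

lemma eq_of_prod1:
  fixes x y :: int
  assumes "\<bar>x\<bar> \<le> 1" "\<bar>y\<bar> \<le> 1" "x * y = 1"
  shows "x = y"
proof -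
  have "x \<in> {-1,0,1}" "y \<in> {-1,0,1}" using assms(1,2) by auto
  then show ?thesis using assms(3) by auto
qed

lemma recip1:
  fixes p q :: int
  assumes "prime p" "p mod 4 = 1" "prime q" "q > 2" "q \<noteq> p" "p > 2"
  shows "Legendre q p = Legendre p q"
proof -
  have "Legendre q p * Legendre p q = (-1::int) ^ (nat ((q - 1) div 2 * ((p - 1) div 2)))"
    using Quadratic_Reciprocity_int[of q p] assms by simp
  moreover have "even ((q - 1) div 2 * ((p - 1) div 2))"
  proof -
    have "(p-1) div 2 = 2 * ((p-1) div 4)" using assms(2) by presburger
    then show ?thesis by simp
  qed
  then have "even (nat ((q - 1) div 2 * ((p - 1) div 2)))"
    using assms by (simp add: even_nat_iff)
  ultimately have "Legendre q p * Legendre p q = 1" by simp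
  then show ?thesis using eq_of_prod1 Leg_abs by blast
qed

theorem theorem4:
  fixes p a b :: int
  assumes "prime p"
    and "[p = 1] (mod 12)"
    and "a > 0" and "b > 0"
    and "p = a^2 - 12 * b^2"
  shows "(\<exists>z::int. [z^4 + 360 * z^2 - 48 = 0] (mod p)) \<longleftrightarrow> [a = 1] (mod 3)"
proof -
  note pr = assms(1) and a0 = assms(3) and b0 = assms(4) and pe = assms(5)
  have p12: "p mod 12 = 1" using assms(2) by (simp add: cong_def)
  have pge: "p \<ge> 2" using prime_ge_2_int[OF pr] .
  have p13: "p \<ge> 13" using p12 pge by presburger
  then have p2: "p > 2" and p8: "p > 8" by simp_all
  have p4: "p mod 4 = 1" and p3: "p mod 3 = 1" using p12 by presburger+
  have ea: "a^2 = p + 12*b^2" using pe by simp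
  have not_both: "\<not> (p dvd a \<and> p dvd b)"
  proof
    assume "p dvd a \<and> p dvd b"
    then have da: "p dvd a" and db: "p dvd b" by auto
    obtain a' where a': "a = p*a'" using da by (rule dvdE)
    obtain b' where b': "b = p*b'" using db by (rule dvdE)
    note ab = a' b'
    have "p = p*(p*(a'^2 - 12*b'^2))" using pe unfolding ab by (simp add: power2_eq_square algebra_simps)
    then have "1 = p*(a'^2 - 12*b'^2)" using pge by simp
    then have "p dvd 1" by (metis dvd_triv_left)
    then show False using pge by (simp add: zdvd_imp_le)
  qed
  have pb: "\<not> p dvd b"
  proof
    assume h: "p dvd b"
    then have "p dvd 12*b^2" by (simp add: power2_eq_square)
    then have "p dvd p + 12*b^2" by simp
    then have "p dvd a^2" using ea by simp
    then have "p dvd a" using pr prime_dvd_power by blast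
    then show False using not_both h by blast
  qed
  have pa: "\<not> p dvd a"
  proof
    assume h: "p dvd a"
    then have "p dvd a^2" by (simp add: power2_eq_square)
    then have "p dvd a^2 - p" by simp
    then have "p dvd 12*b^2" using ea by simp
    then have "p dvd 12 \<or> p dvd b^2" using pr prime_dvd_mult_iff by blast
    moreover have "\<not> p dvd 12" using p13 by (auto dest: zdvd_imp_le)
    ultimately have "p dvd b" using pr prime_dvd_power by blast
    then show False using pb by blast
  qed
  have odd_a: "odd a"
  proof
    assume "even a"
    then have "even (a^2)" by simp
    moreover have "even (12*b^2)" by simp
    ultimately have "even p" using pe by simp
    then show False using p4 by presburger
  qed
  have a3: "\<not> 3 dvd a"
  proof
    assume "3 dvd a"
    then have "3 dvd a^2" by (simp add: power2_eq_square)
    then have "3 dvd p + 12*b^2" using ea by simp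
    then have "3 dvd p" by (simp add: dvd_add_left_iff)
    then show False using p3 by presburger
  qed
  have qpdiv: "q = p" if "prime q" "q dvd a" "q dvd b" for q
  proof -
    have "q dvd a^2" using that(2) by (simp add: power2_eq_square)
    moreover have "q dvd 12*b^2" using that(3) by (simp add: power2_eq_square)
    ultimately have "q dvd a^2 - 12*b^2" by (rule dvd_diff)
    then have "q dvd p" using pe by simp
    then show ?thesis using primes_dvd_imp_eq that(1) pr by blast
  qed
  have A: "a mod 3 \<noteq> 0 \<and> Legendre a p = (if a mod 3 = 1 then 1 else -1)"
  proof (rule prod_A[OF pr p2 a0], intro allI impI)
    fix q assume q: "prime q" "q dvd a"
    have q1: "q > 1" using prime_gt_1_int[OF q(1)] .
    have qm3: "q mod 3 \<noteq> 0"
    proof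
      assume "q mod 3 = 0"
      then have "3 dvd q" by presburger
      then have "3 dvd a" using q(2) by (rule dvd_trans)
      then show False using a3 by simp
    qed
    have qn2: "q \<noteq> 2" using q(2) odd_a by auto
    have qn3: "q \<noteq> 3" using qm3 by auto
    have q3: "q > 3" using q1 qn2 qn3 by linarith
    have qb: "\<not> q dvd b" using qpdiv[OF q] q(2) pa by auto
    have qp: "q \<noteq> p" using pa q(2) by auto
    have q2b: "\<not> q dvd 2*b"
    proof
      assume "q dvd 2*b"
      then have "q dvd 2 \<or> q dvd b" using q(1) prime_dvd_mult_iff by blast
      then show False using qb q3 by (auto dest: zdvd_imp_le)
    qed
    have "[p = -3*(2*b)^2] (mod q)"
    proof -
      have "p - (-3*(2*b)^2) = a^2" using ea by (simp add: power2_eq_square algebra_simps)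
      moreover have "q dvd a^2" using q(2) by (simp add: power2_eq_square)
      ultimately show ?thesis by (simp add: cong_iff_dvd_diff)
    qed
    then have "Legendre p q = Legendre (-3*(2*b)^2) q" using Leg_cong[OF q(1)] q3 by simp
    also have "\<dots> = Legendre (-3) q * Legendre ((2*b)^2) q" using q3 by (intro Leg_mult[OF q(1)]) simp
    also have "\<dots> = Legendre (-3) q" using Leg_sq[OF q2b q(1)] by simp
    finally have Lpq: "Legendre p q = Legendre (-3) q" .
    have "Legendre q p = Legendre p q" using recip1[OF pr p4 q(1) _ qp p2] q3 by simp
    then show "q mod 3 \<noteq> 0 \<and> Legendre q p = (if q mod 3 = 1 then 1 else -1)"
      using Lpq Leg_m3[OF q(1) q3] qm3 by simp
  qed
  have B: "Legendre b p = 1"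
  proof (rule prod_B[OF pr p2 b0], intro allI impI)
    fix q assume q: "prime q" "q dvd b"
    have q1: "q > 1" using prime_gt_1_int[OF q(1)] .
    have qa: "\<not> q dvd a" using qpdiv[OF q(1) _ q(2)] q(2) pb by auto
    have qp: "q \<noteq> p" using pb q(2) by auto
    show "Legendre q p = 1"
    proof (cases "q = 2")
      case True
      then have "even b" using q(2) by simp
      then obtain c where c: "b = 2*c" by (auto elim: evenE)
      obtain u where u: "a = 2*u+1" using odd_a by (auto elim: oddE)
      have "even (u*(u+1))" by simp
      then obtain w where w: "u*(u+1) = 2*w" by (rule evenE)
      have "p = 4*(u*(u+1)) + 1 - 48*c^2" using pe unfolding c u by (simp add: power2_eq_square algebra_simps)
      then have "p = 8*(w - 6*c^2) + 1" using w by simp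
      moreover have "\<forall>X::int. (8*X+1) mod 8 = 1" by presburger
      ultimately have "p mod 8 = 1" by metis
      then show ?thesis using Leg_2[OF pr] True by simp
    next
      case False
      then have q2: "q > 2" using q1 by simp
      have "[p = a^2] (mod q)"
      proof -
        have "a^2 - p = 12*b^2" using ea by simp
        moreover have "q dvd 12*b^2" using q(2) by (simp add: power2_eq_square)
        ultimately have "q dvd a^2 - p" by simp
        then have "q dvd p - a^2" by (simp add: dvd_diff_commute)
        then show ?thesis by (simp add: cong_iff_dvd_diff)
      qed
      then have "Legendre p q = Legendre (a^2) q" using Leg_cong[OF q(1) q2] by simp
      also have "\<dots> = 1" using Leg_sq[OF qa q(1)] .
      finally show ?thesis using recip1[OF pr p4 q(1) q2 qp p2] by simp
    qed
  qed
  have "coprime b p" using prime_imp_coprime[OF pr pb] by (simp add: coprime_commute)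
  then obtain bi where bi: "[b*bi = 1] (mod p)" using cong_solve_coprime_int by blast
  define s where "s = a*bi"
  have hs: "p dvd s^2 - 12"
  proof -
    have "[a^2 = 12*b^2] (mod p)" using pe by (simp add: cong_iff_dvd_diff)
    then have "[a^2*bi^2 = 12*b^2*bi^2] (mod p)" by (rule cong_mult[OF _ cong_refl])
    moreover have "s^2 = a^2*bi^2" unfolding s_def by (simp add: power_mult_distrib)
    moreover have "12*b^2*bi^2 = 12*(b*bi)^2" by (simp add: power_mult_distrib)
    moreover have "[12*(b*bi)^2 = 12*1^2] (mod p)" using bi by (intro cong_mult cong_pow cong_refl)
    ultimately have "[s^2 = 12] (mod p)" by (metis cong_trans power_one mult_1_right)
    then show ?thesis by (simp add: cong_iff_dvd_diff)
  qed
  have pbi: "\<not> p dvd bi"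
  proof
    assume "p dvd bi"
    then have "p dvd b*bi" by simp
    moreover have "p dvd b*bi - 1" using bi by (simp add: cong_iff_dvd_diff)
    ultimately have "p dvd b*bi - (b*bi - 1)" by (rule dvd_diff)
    then have "p dvd 1" by simp
    then show False using pge by (simp add: zdvd_imp_le)
  qed
  have Ls: "Legendre s p = Legendre a p * Legendre b p"
  proof -
    have "[a*b*bi^2 = s*1] (mod p)"
    proof -
      have eq: "a*b*bi^2 = s*(b*bi)" unfolding s_def by (simp add: power2_eq_square algebra_simps)
      show ?thesis unfolding eq using bi by (intro cong_mult cong_refl)
    qed
    then have "Legendre (a*b*bi^2) p = Legendre (s*1) p" by (rule Leg_cong[OF pr p2])
    then have "Legendre s p = Legendre (a*b*bi^2) p" by simp
    also have "\<dots> = Legendre a p * Legendre b p * Legendre (bi^2) p" using Leg_mult[OF pr p2] by simp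
    also have "\<dots> = Legendre a p * Legendre b p" using Leg_sq[OF pbi pr] by simp
    finally show ?thesis .
  qed
  have s0: "\<not> p dvd s"
  proof
    assume "p dvd s"
    then have "p dvd s^2" by (simp add: power2_eq_square)
    then have "p dvd s^2 - (s^2 - 12)" using hs by (rule dvd_diff)
    then have "p dvd 12" by simp
    then show False using p13 by (auto dest: zdvd_imp_le)
  qed
  have LsQ: "Legendre s p = 1 \<longleftrightarrow> QuadRes p s" if "\<not> p dvd s" for s
    using that by (simp add: Legendre_def cong_0_iff)
  have "(\<exists>z::int. [z^4 + 360 * z^2 - 48 = 0] (mod p)) \<longleftrightarrow> Legendre s p = 1"
  proof
    assume "\<exists>z::int. [z^4 + 360 * z^2 - 48 = 0] (mod p)"
    then obtain z where z: "p dvd z^4 + 360 * z^2 - 48" by (auto simp: cong_0_iff)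
    have "(z^2 - (52*s-180))*(z^2 - (52*(-s)-180)) = (z^4 + 360 * z^2 - 48) - 2704*(s^2-12)"
      by (simp add: eval_nat_numeral algebra_simps)
    moreover have "p dvd (z^4 + 360 * z^2 - 48) - 2704*(s^2-12)"
      by (rule dvd_diff[OF z dvd_mult[OF hs]])
    ultimately have "p dvd z^2 - (52*s-180) \<or> p dvd z^2 - (52*(-s)-180)"
      using pr prime_dvd_mult_iff by metis
    then show "Legendre s p = 1"
    proof
      assume "p dvd z^2 - (52*s-180)"
      then have "QuadRes p s" using K2[OF pr p8 hs] by blast
      then show ?thesis using LsQ[OF s0] by simp
    next
      assume h: "p dvd z^2 - (52*(-s)-180)"
      have "p dvd (-s)^2 - 12" using hs by simp
      then have "QuadRes p (-s)" using K2[OF pr p8 _ h] by blast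
      moreover have "\<not> p dvd -s" using s0 by simp
      ultimately have "Legendre (-s) p = 1" using LsQ by blast
      moreover have "Legendre (-s) p = Legendre (-1) p * Legendre s p"
        using Leg_mult[OF pr p2, of "-1" s] by simp
      ultimately show ?thesis using Leg_neg1[OF pr p4] by simp
    qed
  next
    assume "Legendre s p = 1"
    then have "QuadRes p s" using LsQ[OF s0] by simp
    then obtain y where y: "[y^2 = s] (mod p)" unfolding QuadRes_def by blast
    have "\<not> p dvd 16"
    proof
      assume "p dvd 16"
      then have "p dvd 2^4" by simp
      then have "p dvd 2" using pr prime_dvd_power by blast
      then show False using p13 by (auto dest: zdvd_imp_le)
    qed
    then have "coprime p 16" by (rule prime_imp_coprime[OF pr])
    then have "coprime 16 p" by (simp add: coprime_commute)
    then obtain i where i: "[16*i = 1] (mod p)" using cong_solve_coprime_int by blast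
    show "\<exists>z::int. [z^4 + 360 * z^2 - 48 = 0] (mod p)"
      using K1[OF hs y i refl] by blast
  qed
  also have "\<dots> \<longleftrightarrow> Legendre a p = 1" using Ls B by simp
  also have "\<dots> \<longleftrightarrow> a mod 3 = 1" using A by auto
  also have "\<dots> \<longleftrightarrow> [a = 1] (mod 3)" by (simp add: cong_def)
  finally show ?thesis .
qed

end
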